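(* Let $f:\mathbb R\to B_2$ have a left limit at every point of $\mathbb R\cup\{\infty\}$ and be left continuous at every point of $\mathbb R$, and extend $f$ to $\mathbb R\cup\{\infty\}$ by $f(\infty)=f(\infty-0)$. Let $\mu:\mathrm{Sym}^-\to B_2$ be the function given by $\mu\big([[a_1,b_1))\Delta\cdots\Delta[[a_n,b_n))\big)=f(a_1)\oplus f(b_1)\oplus\cdots\oplus f(a_n)\oplus f(b_n)$ for $a_1,\dots,a_n,b_1,\dots,b_n\in\mathbb R\cup\{\infty\}$. Then $\mu$ is a measure.
   Context: $B_2=\{0,1\}$, $\oplus$ addition modulo 2, $\Delta$ symmetric difference. For $t\in\mathbb R\cup\{\infty\}$, $f$ has a left limit at $t$ if there is $t'<t$ (real) such that $f$ is constant on $(t',t)$; this constant is $f(t-0)$. $f$ is left continuous at $t\in\mathbb R$ if $f(t)=f(t-0)$. For $a,b\in\mathbb R\cup\{\infty\}$ the symmetric interval is $[[a,b))=[a,b)$ if $a<b$, $=[b,a)$ if $b<a$, $=\emptyset$ if $a=b$ (subsets of $\mathbb R$). $\mathrm{Sym}^-$ is the family of subsets of $\mathbb R$ generated by these intervals under $\Delta$ and $\cap$; its elements are finite symmetric differences of such intervals. A function $\mu:\mathrm{Sym}^-\to B_2$ is a measure if for every sequence of pairwise disjoint sets of $\mathrm{Sym}^-$ whose union lies in $\mathrm{Sym}^-$, only finitely many have $\mu$-value 1 and $\mu$ of the union is their number modulo 2. *)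

theory Defs
  imports "HOL-Library.Extended_Real"
begin

text \<open>Conventions: B_2 is rendered as bool (1 = True, 0 = False), addition modulo 2
  is (\<noteq>) (exclusive or). The extended line R \<union> {\<infinity>} is rendered as the ereals
  different from -\<infinity>.\<close>

definition symdiff :: "'a set \<Rightarrow> 'a set \<Rightarrow> 'a set" where
  "symdiff A B = (A - B) \<union> (B - A)"

definition sym_ivl :: "ereal \<Rightarrow> ereal \<Rightarrow> real set" where
  "sym_ivl a b = (if a < b then {x. a \<le> ereal x \<and> ereal x < b}
                  else if b < a then {x. b \<le> ereal x \<and> ereal x < a}
                  else {})"

inductive_set SymMinus :: "real set set" where
  ivl: "a \<noteq> -\<infinity> \<Longrightarrow> b \<noteq> -\<infinity> \<Longrightarrow> sym_ivl a b \<in> SymMinus"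
| sdiff: "A \<in> SymMinus \<Longrightarrow> B \<in> SymMinus \<Longrightarrow> symdiff A B \<in> SymMinus"
| inter: "A \<in> SymMinus \<Longrightarrow> B \<in> SymMinus \<Longrightarrow> A \<inter> B \<in> SymMinus"

definition has_left_limit :: "(real \<Rightarrow> bool) \<Rightarrow> real \<Rightarrow> bool" where
  "has_left_limit f t \<longleftrightarrow> (\<exists>t' < t. \<exists>c. \<forall>x. t' < x \<and> x < t \<longrightarrow> f x = c)"

definition left_lim :: "(real \<Rightarrow> bool) \<Rightarrow> real \<Rightarrow> bool" where
  "left_lim f t = (THE c. \<exists>t' < t. \<forall>x. t' < x \<and> x < t \<longrightarrow> f x = c)"

definition has_left_limit_inf :: "(real \<Rightarrow> bool) \<Rightarrow> bool" where
  "has_left_limit_inf f \<longleftrightarrow> (\<exists>t'. \<exists>c. \<forall>x. t' < x \<longrightarrow> f x = c)"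

definition left_lim_inf :: "(real \<Rightarrow> bool) \<Rightarrow> bool" where
  "left_lim_inf f = (THE c. \<exists>t'. \<forall>x. t' < x \<longrightarrow> f x = c)"

definition left_continuous_at :: "(real \<Rightarrow> bool) \<Rightarrow> real \<Rightarrow> bool" where
  "left_continuous_at f t \<longleftrightarrow> f t = left_lim f t"

text \<open>Extension of f to R \<union> {\<infinity>} with f(\<infinity>) = f(\<infinity>-0) (value at -\<infinity> is irrelevant).\<close>
definition f_ext :: "(real \<Rightarrow> bool) \<Rightarrow> ereal \<Rightarrow> bool" where
  "f_ext f a = (case a of ereal x \<Rightarrow> f x | PInfty \<Rightarrow> left_lim_inf f | MInfty \<Rightarrow> False)"

definition is_B2_measure :: "'a set set \<Rightarrow> ('a set \<Rightarrow> bool) \<Rightarrow> bool" where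
  "is_B2_measure S \<mu> \<longleftrightarrow>
     (\<forall>A :: nat \<Rightarrow> 'a set. (\<forall>i. A i \<in> S) \<and> (\<forall>i j. i \<noteq> j \<longrightarrow> A i \<inter> A j = {})
        \<and> (\<Union>i. A i) \<in> S \<longrightarrow>
        finite {i. \<mu> (A i)} \<and> \<mu> (\<Union>i. A i) = odd (card {i. \<mu> (A i)}))"

end

theory Submission
  imports Defs
begin


definition FS :: "(ereal \<times> ereal) list \<Rightarrow> real set" where
  "FS ps = foldr (\<lambda>(a, b) S. symdiff (sym_ivl a b) S) ps {}"
definition XS :: "(real \<Rightarrow> bool) \<Rightarrow> (ereal \<times> ereal) list \<Rightarrow> bool" where
  "XS f ps = foldr (\<lambda>(a, b) acc. (acc \<noteq> (f_ext f a \<noteq> f_ext f b))) ps False"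
definition valid :: "(ereal \<times> ereal) list \<Rightarrow> bool" where
  "valid ps = (\<forall>(a, b) \<in> set ps. a \<noteq> -\<infinity> \<and> b \<noteq> -\<infinity>)"
definition RR :: "real set set" where
  "RR = {S. \<exists>ps. valid ps \<and> S = FS ps}"

lemma symdiff_mem[simp]: "x \<in> symdiff A B \<longleftrightarrow> (x \<in> A) \<noteq> (x \<in> B)"
  by (auto simp: symdiff_def)

lemma FS_Nil[simp]: "FS [] = {}" by (simp add: FS_def)
lemma FS_Cons[simp]: "FS ((a,b)#ps) = symdiff (sym_ivl a b) (FS ps)" by (simp add: FS_def)
lemma XS_Nil[simp]: "XS f [] = False" by (simp add: XS_def)
lemma XS_Cons[simp]: "XS f ((a,b)#ps) = (XS f ps \<noteq> (f_ext f a \<noteq> f_ext f b))" by (simp add: XS_def)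
lemma valid_Nil[simp]: "valid []" by (simp add: valid_def)
lemma valid_Cons[simp]: "valid ((a,b)#ps) = (a \<noteq> -\<infinity> \<and> b \<noteq> -\<infinity> \<and> valid ps)" by (auto simp: valid_def)
lemma valid_append[simp]: "valid (ps @ qs) = (valid ps \<and> valid qs)" by (auto simp: valid_def)

lemma FS_append: "FS (ps @ qs) = symdiff (FS ps) (FS qs)"
proof (induction ps)
  case Nil then show ?case by (simp add: set_eq_iff)
next
  case (Cons p ps)
  obtain a b where p: "p = (a,b)" by force
  show ?case unfolding set_eq_iff p using Cons by auto
qed

lemma XS_append: "XS f (ps @ qs) = (XS f ps \<noteq> XS f qs)"
  apply (induction ps) apply simp
  apply (case_tac a) apply auto done

lemma sym_ivl_eq: "sym_ivl a b = {x. min a b \<le> ereal x \<and> ereal x < max a b}"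
  by (auto simp: sym_ivl_def min_def max_def)

definition clip :: "ereal \<Rightarrow> ereal \<Rightarrow> ereal \<times> ereal \<Rightarrow> ereal \<times> ereal" where
 "clip u v p = (let lo = max (min (fst p) (snd p)) (min u v); hi = min (max (fst p) (snd p)) (max u v)
    in if lo < hi then (lo, hi) else (lo, lo))"

lemma clip_ivl: "sym_ivl a b \<inter> sym_ivl u v = sym_ivl (fst (clip u v (a,b))) (snd (clip u v (a,b)))"
proof -
  define lo where "lo = max (min a b) (min u v)"
  define hi where "hi = min (max a b) (max u v)"
  have c: "clip u v (a,b) = (if lo < hi then (lo,hi) else (lo,lo))"
    unfolding clip_def Let_def lo_def hi_def by simp
  have L: "sym_ivl a b \<inter> sym_ivl u v = {x. lo \<le> ereal x \<and> ereal x < hi}"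
    unfolding sym_ivl_eq lo_def hi_def by auto
  show ?thesis
  proof (cases "lo < hi")
    case True
    then have "sym_ivl lo hi = {x. lo \<le> ereal x \<and> ereal x < hi}"
      unfolding sym_ivl_eq by (simp add: min_absorb1 max_absorb2 less_imp_le)
    then show ?thesis using L c True by simp
  next
    case False
    then have "{x. lo \<le> ereal x \<and> ereal x < hi} = {}" by (auto simp: not_less)
    then show ?thesis using L c False by (simp add: sym_ivl_def)
  qed
qed

lemma FS_clip: "FS ps \<inter> sym_ivl u v = FS (map (clip u v) ps)"
proof (induction ps)
  case Nil then show ?case by simp
next
  case (Cons p ps)
  obtain a b where p: "p = (a,b)" by force
  obtain c d where cd: "clip u v (a,b) = (c,d)" by force
  have "FS (p#ps) \<inter> sym_ivl u v = symdiff (sym_ivl a b \<inter> sym_ivl u v) (FS ps \<inter> sym_ivl u v)"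
    by (auto simp: p)
  also have "\<dots> = symdiff (sym_ivl c d) (FS (map (clip u v) ps))"
    using clip_ivl[of a b u v] cd Cons by simp
  finally show ?case by (simp add: p cd)
qed

lemma clip_valid: assumes "a \<noteq> -\<infinity>" "b \<noteq> -\<infinity>" "u \<noteq> -\<infinity>" "v \<noteq> -\<infinity>"
  shows "fst (clip u v (a,b)) \<noteq> -\<infinity> \<and> snd (clip u v (a,b)) \<noteq> -\<infinity>"
  using assms unfolding clip_def Let_def by (auto simp: min_def max_def)

lemma valid_map_clip: "valid ps \<Longrightarrow> u \<noteq> -\<infinity> \<Longrightarrow> v \<noteq> -\<infinity> \<Longrightarrow> valid (map (clip u v) ps)"
proof (induction ps)
  case Nil then show ?case by simp
next
  case (Cons p ps)
  obtain a b where p: "p = (a,b)" by force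
  obtain c d where cd: "clip u v (a,b) = (c,d)" by force
  show ?case using Cons clip_valid[of a b u v] by (simp add: p cd)
qed

lemma RR_empty: "{} \<in> RR" unfolding RR_def by (rule CollectI, rule exI[of _ "[]"]) simp

lemma RR_ivl: "a \<noteq> -\<infinity> \<Longrightarrow> b \<noteq> -\<infinity> \<Longrightarrow> sym_ivl a b \<in> RR"
  unfolding RR_def by (rule CollectI, rule exI[of _ "[(a,b)]"]) (auto simp: symdiff_def)

lemma RR_symdiff: "S \<in> RR \<Longrightarrow> T \<in> RR \<Longrightarrow> symdiff S T \<in> RR"
proof -
  assume "S \<in> RR" "T \<in> RR"
  then obtain ps qs where "valid ps" "S = FS ps" "valid qs" "T = FS qs" unfolding RR_def by blast
  then show ?thesis unfolding RR_def by (intro CollectI exI[of _ "ps @ qs"]) (simp add: FS_append)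
qed

lemma RR_inter_ivl: "S \<in> RR \<Longrightarrow> u \<noteq> -\<infinity> \<Longrightarrow> v \<noteq> -\<infinity> \<Longrightarrow> S \<inter> sym_ivl u v \<in> RR"
  unfolding RR_def using FS_clip valid_map_clip by blast

lemma RR_inter: assumes "S \<in> RR" "T \<in> RR" shows "S \<inter> T \<in> RR"
proof -
  obtain qs where q: "valid qs" "T = FS qs" using assms(2) unfolding RR_def by blast
  have "S \<inter> FS qs \<in> RR" using q(1)
  proof (induction qs)
    case Nil then show ?case by (simp add: RR_empty)
  next
    case (Cons p qs)
    obtain a b where p: "p = (a,b)" by force
    have "S \<inter> FS (p#qs) = symdiff (S \<inter> sym_ivl a b) (S \<inter> FS qs)" by (auto simp: p)
    then show ?case using Cons p assms(1) by (simp add: RR_symdiff RR_inter_ivl)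
  qed
  then show ?thesis using q by simp
qed

lemma SymMinus_RR: "S \<in> SymMinus \<Longrightarrow> S \<in> RR"
  by (induction rule: SymMinus.induct) (auto simp: RR_ivl RR_symdiff RR_inter)



context
  fixes f :: "real \<Rightarrow> bool" and \<mu> :: "real set \<Rightarrow> bool"
  assumes H: "\<And>ps. valid ps \<Longrightarrow> \<mu> (FS ps) = XS f ps"
begin

lemma mu_symdiff: "S \<in> RR \<Longrightarrow> T \<in> RR \<Longrightarrow> \<mu> (symdiff S T) = (\<mu> S \<noteq> \<mu> T)"
proof -
  assume "S \<in> RR" "T \<in> RR"
  then obtain ps qs where "valid ps" "S = FS ps" "valid qs" "T = FS qs" unfolding RR_def by blast
  then show ?thesis using H[of "ps @ qs"] H[of ps] H[of qs] by (simp add: FS_append XS_append)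
qed

lemma mu_empty: "\<mu> {} = False"
  using H[of "[]"] by simp

lemma mu_ivl: "a \<noteq> -\<infinity> \<Longrightarrow> b \<noteq> -\<infinity> \<Longrightarrow> \<mu> (sym_ivl a b) = (f_ext f a \<noteq> f_ext f b)"
proof -
  assume "a \<noteq> -\<infinity>" "b \<noteq> -\<infinity>"
  moreover have "FS [(a,b)] = sym_ivl a b" by (auto simp: symdiff_def)
  ultimately show ?thesis using H[of "[(a,b)]"] by simp
qed

lemma XS_false: "(\<And>a b. (a,b) \<in> set ps \<Longrightarrow> f_ext f a = f_ext f b) \<Longrightarrow> XS f ps = False"
  apply (induction ps) apply simp
  apply (case_tac a) apply auto done

lemma mu_const:
  assumes S: "S \<in> RR" and sub: "S \<subseteq> {y. ereal z \<le> ereal y \<and> ereal y < s}"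
    and c: "\<And>e. ereal z \<le> e \<Longrightarrow> e \<le> s \<Longrightarrow> f_ext f e = c"
  shows "\<mu> S = False"
proof (cases "ereal z < s")
  case False
  have "S = {}"
  proof -
    { fix x assume "x \<in> S"
      then have "ereal z \<le> ereal x" "ereal x < s" using sub by auto
      then have "ereal z < s" by (rule le_less_trans)
      with False have False by simp }
    then show ?thesis by blast
  qed
  then show ?thesis by (simp add: mu_empty)
next
  case True
  obtain ps where ps: "valid ps" "S = FS ps" using S unfolding RR_def by blast
  have sne: "s \<noteq> -\<infinity>" using True by auto
  have m: "min (ereal z) s = ereal z" "max (ereal z) s = s" using True by (auto simp: min_def max_def)
  have "S \<subseteq> sym_ivl (ereal z) s" using sub unfolding sym_ivl_eq m by simp
  then have "S = FS ps \<inter> sym_ivl (ereal z) s" using ps(2) by blast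
  also have "\<dots> = FS (map (clip (ereal z) s) ps)" by (rule FS_clip)
  finally have eq: "S = FS (map (clip (ereal z) s) ps)" .
  have v: "valid (map (clip (ereal z) s) ps)" using valid_map_clip ps sne by auto
  have "XS f (map (clip (ereal z) s) ps) = False"
  proof (rule XS_false)
    fix a b assume "(a,b) \<in> set (map (clip (ereal z) s) ps)"
    then obtain a0 b0 where "(a,b) = clip (ereal z) s (a0,b0)" by auto
    moreover note m
    define lo where "lo = max (min a0 b0) (ereal z)"
    define hi where "hi = min (max a0 b0) s"
    ultimately have ab: "(a,b) = (if lo < hi then (lo,hi) else (lo,lo))"
      unfolding clip_def Let_def lo_def hi_def fst_conv snd_conv by (simp only: m)
    have "ereal z \<le> lo" unfolding lo_def by (rule max.cobounded2)
    have "hi \<le> s" unfolding hi_def by (rule min.cobounded2)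
    show "f_ext f a = f_ext f b"
    proof (cases "lo < hi")
      case True
      with ab have "a = lo" "b = hi" by simp_all
      moreover have "lo \<le> s" using True \<open>hi \<le> s\<close> by (meson less_imp_le order_trans)
      moreover have "ereal z \<le> hi" using True \<open>ereal z \<le> lo\<close> by (meson less_imp_le order_trans)
      moreover note \<open>ereal z \<le> lo\<close> \<open>hi \<le> s\<close>
      ultimately show ?thesis using c[of a] c[of b] by simp
    next
      case False
      with ab have "a = lo" "b = lo" by simp_all
      then show ?thesis by simp
    qed
  qed
  then show ?thesis using eq v H by simp
qed

end

lemma RL_SymMinus: "S \<in> SymMinus \<Longrightarrow> \<exists>d. s < d \<and> (\<forall>y. s \<le> y \<and> y < d \<longrightarrow> (y \<in> S \<longleftrightarrow> s \<in> S))"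
proof (induction rule: SymMinus.induct)
  case (ivl a b)
  show ?case
  proof (cases "s \<in> sym_ivl a b")
    case True
    then have s1: "min a b \<le> ereal s" "ereal s < max a b" unfolding sym_ivl_eq by auto
    then obtain d where d: "ereal s < ereal d" "ereal d < max a b" using ereal_dense2 by blast
    show ?thesis
    proof (intro exI[of _ d] conjI allI impI)
      show "s < d" using d by simp
      fix y assume y: "s \<le> y \<and> y < d"
      have "ereal s \<le> ereal y" using y by simp
      with s1(1) have "min a b \<le> ereal y" by (rule order_trans)
      moreover have "ereal y < ereal d" using y by simp
      then have "ereal y < max a b" using d(2) by (rule less_trans)
      ultimately show "y \<in> sym_ivl a b \<longleftrightarrow> s \<in> sym_ivl a b" using True unfolding sym_ivl_eq by simp
    qed
  next
    case False
    then have "\<not> (min a b \<le> ereal s \<and> ereal s < max a b)" unfolding sym_ivl_eq by auto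
    then have "ereal s < min a b \<or> max a b \<le> ereal s" by (auto simp only: not_le not_less)
    then show ?thesis
    proof
      assume s1: "ereal s < min a b"
      then obtain d where d: "ereal s < ereal d" "ereal d < min a b" using ereal_dense2 by blast
      show ?thesis
      proof (intro exI[of _ d] conjI allI impI)
        show "s < d" using d by simp
        fix y assume y: "s \<le> y \<and> y < d"
        have "ereal y < ereal d" using y by simp
        then have "ereal y < min a b" using d(2) by (rule less_trans)
        then have "\<not> min a b \<le> ereal y" by (simp only: not_le)
        then have "y \<notin> sym_ivl a b" unfolding sym_ivl_eq by blast
        then show "y \<in> sym_ivl a b \<longleftrightarrow> s \<in> sym_ivl a b" using False by simp
      qed
    next
      assume s1: "max a b \<le> ereal s"
      show ?thesis
      proof (intro exI[of _ "s+1"] conjI allI impI)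
        show "s < s+1" by simp
        fix y assume y: "s \<le> y \<and> y < s+1"
        have "ereal s \<le> ereal y" using y by simp
        with s1 have "max a b \<le> ereal y" by (rule order_trans)
        then have "\<not> ereal y < max a b" by (simp only: not_less)
        then have "y \<notin> sym_ivl a b" unfolding sym_ivl_eq by blast
        then show "y \<in> sym_ivl a b \<longleftrightarrow> s \<in> sym_ivl a b" using False by simp
      qed
    qed
  qed
next
  case (sdiff A B)
  obtain d1 where d1: "s < d1 \<and> (\<forall>y. s \<le> y \<and> y < d1 \<longrightarrow> (y \<in> A \<longleftrightarrow> s \<in> A))"
    using sdiff.IH(1) by (rule exE)
  obtain d2 where d2: "s < d2 \<and> (\<forall>y. s \<le> y \<and> y < d2 \<longrightarrow> (y \<in> B \<longleftrightarrow> s \<in> B))"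
    using sdiff.IH(2) by (rule exE)
  note d = conjunct1[OF d1] conjunct2[OF d1] conjunct1[OF d2] conjunct2[OF d2]
  show ?case
  proof (intro exI[of _ "min d1 d2"] conjI allI impI)
    show "s < min d1 d2" using d by simp
    fix y assume y: "s \<le> y \<and> y < min d1 d2"
    have y1: "s \<le> y \<and> y < d1" and y2: "s \<le> y \<and> y < d2" using y by simp_all
    have "(y \<in> A \<longleftrightarrow> s \<in> A)" using y1 by (rule d(2)[rule_format])
    moreover have "(y \<in> B \<longleftrightarrow> s \<in> B)" using y2 by (rule d(4)[rule_format])
    ultimately show "y \<in> symdiff A B \<longleftrightarrow> s \<in> symdiff A B" by simp
  qed
next
  case (inter A B)
  obtain d1 where d1: "s < d1 \<and> (\<forall>y. s \<le> y \<and> y < d1 \<longrightarrow> (y \<in> A \<longleftrightarrow> s \<in> A))"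
    using inter.IH(1) by (rule exE)
  obtain d2 where d2: "s < d2 \<and> (\<forall>y. s \<le> y \<and> y < d2 \<longrightarrow> (y \<in> B \<longleftrightarrow> s \<in> B))"
    using inter.IH(2) by (rule exE)
  note d = conjunct1[OF d1] conjunct2[OF d1] conjunct1[OF d2] conjunct2[OF d2]
  show ?case
  proof (intro exI[of _ "min d1 d2"] conjI allI impI)
    show "s < min d1 d2" using d by simp
    fix y assume y: "s \<le> y \<and> y < min d1 d2"
    have y1: "s \<le> y \<and> y < d1" and y2: "s \<le> y \<and> y < d2" using y by simp_all
    have "(y \<in> A \<longleftrightarrow> s \<in> A)" using y1 by (rule d(2)[rule_format])
    moreover have "(y \<in> B \<longleftrightarrow> s \<in> B)" using y2 by (rule d(4)[rule_format])
    ultimately show "y \<in> A \<inter> B \<longleftrightarrow> s \<in> A \<inter> B" by simp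
  qed
qed

lemma BB_SymMinus: "S \<in> SymMinus \<Longrightarrow> \<exists>a0::real. \<forall>y\<in>S. a0 \<le> y"
proof (induction rule: SymMinus.induct)
  case (ivl a b)
  show ?case
  proof (cases "min a b = \<infinity>")
    case True
    then have "sym_ivl a b = {}" unfolding sym_ivl_eq by simp
    then show ?thesis by simp
  next
    case False
    moreover have "min a b \<noteq> -\<infinity>" using ivl by (simp add: min_def)
    ultimately obtain r where r: "min a b = ereal r" by (cases "min a b") auto
    have "\<forall>y\<in>sym_ivl a b. r \<le> y" unfolding sym_ivl_eq r by simp
    then show ?thesis by blast
  qed
next
  case (sdiff A B)
  then obtain a1 a2 :: real where h: "\<forall>y\<in>A. a1 \<le> y" "\<forall>y\<in>B. a2 \<le> y" by blast
  have "\<forall>y\<in>symdiff A B. min a1 a2 \<le> y"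
  proof
    fix y assume "y \<in> symdiff A B"
    then have "y \<in> A \<or> y \<in> B" by (auto simp: symdiff_def)
    then show "min a1 a2 \<le> y" using h by (meson min.coboundedI1 min.coboundedI2)
  qed
  then show ?case by blast
next
  case (inter A B)
  then obtain a1 :: real where h: "\<forall>y\<in>A. a1 \<le> y" by blast
  then have "\<forall>y\<in>A \<inter> B. a1 \<le> y" by simp
  then show ?case by blast
qed

lemma fext_left:
  assumes ll: "\<forall>t. has_left_limit f t" and li: "has_left_limit_inf f"
    and lc: "\<forall>t. left_continuous_at f t" and s: "s \<noteq> -\<infinity>"
  shows "\<exists>s'::real. ereal s' < s \<and> (\<forall>e. ereal s' < e \<and> e \<le> s \<longrightarrow> f_ext f e = f_ext f s)"
proof (cases s)
  case (real t)
  obtain t' c where t': "t' < t" "\<forall>x. t' < x \<and> x < t \<longrightarrow> f x = c"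
    using ll unfolding has_left_limit_def by blast
  have "left_lim f t = c" unfolding left_lim_def
  proof (rule the_equality)
    show "\<exists>t'<t. \<forall>x. t' < x \<and> x < t \<longrightarrow> f x = c" using t' by blast
  next
    fix c' assume "\<exists>t'<t. \<forall>x. t' < x \<and> x < t \<longrightarrow> f x = c'"
    then obtain t2 where t2: "t2 < t" "\<forall>x. t2 < x \<and> x < t \<longrightarrow> f x = c'" by blast
    define p where "p = (max t' t2 + t)/2"
    have p: "t' < p" "t2 < p" "p < t" using t' \<open>t2 < t\<close> unfolding p_def by auto
    have "f p = c'" using t2(2) p by simp
    moreover have "f p = c" using t'(2) p by simp
    ultimately show "c' = c" by simp
  qed
  then have ft: "f t = c" using lc unfolding left_continuous_at_def by simp
  show ?thesis
  proof (intro exI[of _ t'] conjI allI impI)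
    show "ereal t' < s" using t' real by simp
    fix e assume e: "ereal t' < e \<and> e \<le> s"
    then obtain x where x: "e = ereal x" using real by (cases e) auto
    have "f x = f t"
    proof (cases "x = t")
      case False
      then have "t' < x" "x < t" using e x real by auto
      then show ?thesis using t' ft by simp
    qed simp
    then show "f_ext f e = f_ext f s" using x real by (simp add: f_ext_def)
  qed
next
  case PInf
  obtain t' c where t': "\<forall>x. t' < x \<longrightarrow> f x = c"
    using li unfolding has_left_limit_inf_def by blast
  have "left_lim_inf f = c" unfolding left_lim_inf_def
  proof (rule the_equality)
    show "\<exists>t'. \<forall>x. t' < x \<longrightarrow> f x = c" using t' by blast
  next
    fix c' assume "\<exists>t'. \<forall>x. t' < x \<longrightarrow> f x = c'"
    then obtain t2 where t2: "\<forall>x. t2 < x \<longrightarrow> f x = c'" by blast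
    have p: "t' < max t' t2 + 1" "t2 < max t' t2 + 1" by auto
    have "f (max t' t2 + 1) = c'" using t2 p by simp
    moreover have "f (max t' t2 + 1) = c" using t' p by simp
    ultimately show "c' = c" by simp
  qed
  show ?thesis
  proof (intro exI[of _ t'] conjI allI impI)
    show "ereal t' < s" using PInf by simp
    fix e assume e: "ereal t' < e \<and> e \<le> s"
    show "f_ext f e = f_ext f s"
    proof (cases e)
      case (real x)
      then have "t' < x" using e by simp
      then show ?thesis using real t' PInf \<open>left_lim_inf f = c\<close> by (simp add: f_ext_def)
    next
      case PInf
      then show ?thesis using \<open>s = \<infinity>\<close> by simp
    next
      case MInf
      then show ?thesis using e by simp
    qed
  qed
next
  case MInf then show ?thesis using s by simp
qed



definition Lset :: "real set \<Rightarrow> ereal \<Rightarrow> real set" where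
  "Lset S x = S \<inter> {y. ereal y < x}"
definition Mset :: "real set \<Rightarrow> ereal \<Rightarrow> ereal \<Rightarrow> real set" where
  "Mset S z x = S \<inter> {y. z \<le> ereal y \<and> ereal y < x}"

lemma L_RR:
  assumes S: "S \<in> RR" and b: "\<forall>y\<in>S. a0 \<le> y"
  shows "Lset S x \<in> RR"
proof (cases "x \<le> ereal a0")
  case True
  have "Lset S x = {}"
  proof -
    { fix y assume y: "y \<in> Lset S x"
      then have "a0 \<le> y" "ereal y < x" using b unfolding Lset_def by auto
      then have "ereal y < ereal a0" using True by (meson ereal_less_eq(3) less_le_trans)
      with \<open>a0 \<le> y\<close> have False by simp }
    then show ?thesis by blast
  qed
  then show ?thesis by (simp add: RR_empty)
next
  case False
  then have x: "ereal a0 < x" by simp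
  then have xn: "x \<noteq> -\<infinity>" by auto
  have "Lset S x = S \<inter> sym_ivl (ereal a0) x"
  proof -
    have "sym_ivl (ereal a0) x = {y. ereal a0 \<le> ereal y \<and> ereal y < x}"
      using x unfolding sym_ivl_def by simp
    then show ?thesis unfolding Lset_def using b by auto
  qed
  then show ?thesis using RR_inter_ivl[OF S _ xn] by simp
qed

lemma M_eq: "z \<le> x \<Longrightarrow> Mset S z x = symdiff (Lset S x) (Lset S z)"
  unfolding Mset_def Lset_def symdiff_def by (auto simp: not_less)

lemma L_from_M: "z \<le> x \<Longrightarrow> Lset S x = symdiff (Lset S z) (Mset S z x)"
  unfolding Mset_def Lset_def symdiff_def by (auto simp: not_less)

context
  fixes f :: "real \<Rightarrow> bool" and \<mu> :: "real set \<Rightarrow> bool"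
  assumes H: "\<And>ps. valid ps \<Longrightarrow> \<mu> (FS ps) = XS f ps"
begin

lemma mu_split:
  assumes S: "S \<in> RR" and b: "\<forall>y\<in>S. a0 \<le> y" and zx: "z \<le> x"
  shows "\<mu> (Lset S x) = (\<mu> (Lset S z) \<noteq> \<mu> (Mset S z x))"
proof -
  have r1: "Lset S x \<in> RR" "Lset S z \<in> RR" using L_RR[OF S b] by auto
  then have r2: "Mset S z x \<in> RR" using M_eq[OF zx] RR_symdiff by simp
  show ?thesis using L_from_M[OF zx] mu_symdiff[OF H r1(2) r2] by simp
qed

lemma left_step:
  assumes S: "S \<in> RR" and b: "\<forall>y\<in>S. a0 \<le> y" and zs: "ereal z < s"
    and c: "\<And>e. ereal z \<le> e \<Longrightarrow> e \<le> s \<Longrightarrow> f_ext f e = c"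
  shows "\<mu> (Lset S s) = \<mu> (Lset S (ereal z))"
proof -
  have zx: "ereal z \<le> s" using zs by simp
  have "Mset S (ereal z) s \<in> RR" using M_eq[OF zx] RR_symdiff L_RR[OF S b] by simp
  moreover have "Mset S (ereal z) s \<subseteq> {y. ereal z \<le> ereal y \<and> ereal y < s}" unfolding Mset_def by auto
  ultimately have "\<mu> (Mset S (ereal z) s) = False" using mu_const[OF H _ _ c] by blast
  then show ?thesis using mu_split[OF S b zx] by simp
qed

end



theorem theorem6p4:
  fixes f :: "real \<Rightarrow> bool" and \<mu> :: "real set \<Rightarrow> bool"
  assumes "\<forall>t. has_left_limit f t"
    and "has_left_limit_inf f"
    and "\<forall>t. left_continuous_at f t"
    and "\<forall>ps :: (ereal \<times> ereal) list.
           (\<forall>(a, b) \<in> set ps. a \<noteq> -\<infinity> \<and> b \<noteq> -\<infinity>) \<longrightarrow>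
           \<mu> (foldr (\<lambda>(a, b) S. symdiff (sym_ivl a b) S) ps {})
             = foldr (\<lambda>(a, b) acc. (acc \<noteq> (f_ext f a \<noteq> f_ext f b))) ps False"
  shows "is_B2_measure SymMinus \<mu>"
  unfolding is_B2_measure_def
proof (intro allI impI)
  have H: "\<And>ps. valid ps \<Longrightarrow> \<mu> (FS ps) = XS f ps"
    using assms(4) unfolding valid_def FS_def XS_def by blast
  fix A :: "nat \<Rightarrow> real set"
  assume asm: "(\<forall>i. A i \<in> SymMinus) \<and> (\<forall>i j. i \<noteq> j \<longrightarrow> A i \<inter> A j = {}) \<and> (\<Union>i. A i) \<in> SymMinus"
  define U where "U = (\<Union>i. A i)"
  have AS: "\<And>i. A i \<in> SymMinus" using asm by blast
  have disj: "\<And>i j. i \<noteq> j \<Longrightarrow> A i \<inter> A j = {}" using asm by blast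
  have US: "U \<in> SymMinus" using asm unfolding U_def by blast
  have AR: "\<And>i. A i \<in> RR" using AS SymMinus_RR by blast
  have UR: "U \<in> RR" using US SymMinus_RR by blast
  obtain a0 where a0U: "\<forall>y\<in>U. a0 \<le> y" using BB_SymMinus[OF US] by blast
  have a0A: "\<forall>y\<in>A i. a0 \<le> y" for i using a0U unfolding U_def by blast
  define N where "N = (\<lambda>x. {i. \<mu> (Lset (A i) x)})"
  define Q where "Q = (\<lambda>x. finite (N x) \<and> \<mu> (Lset U x) = odd (card (N x)))"
  define G where "G = {x. \<forall>y\<le>x. Q y}"
  define s where "s = Sup G"
  have me: "\<mu> {} = False" using mu_empty[OF H] .
  have Qlow: "Q y" if y: "y \<le> ereal a0" for y
  proof -
    have emp: "Lset S y = {}" if "\<forall>x\<in>S. a0 \<le> x" for S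
    proof -
      { fix x assume x: "x \<in> Lset S y"
        then have "a0 \<le> x" "ereal x < y" using that unfolding Lset_def by auto
        then have "ereal x < ereal a0" using y by (meson ereal_less_eq(3) less_le_trans)
        with \<open>a0 \<le> x\<close> have False by simp }
      then show ?thesis by blast
    qed
    have "N y = {}" unfolding N_def using emp[OF a0A] me by simp
    then show ?thesis unfolding Q_def using emp[OF a0U] me by simp
  qed
  have a0G: "ereal a0 \<in> G" unfolding G_def using Qlow by auto
  then have a0s: "ereal a0 \<le> s" unfolding s_def by (rule Sup_upper)
  have Qlt: "Q y" if "y < s" for y
  proof -
    obtain g where "g \<in> G" "y < g" using \<open>y < s\<close> unfolding s_def by (auto simp: less_Sup_iff)
    then show ?thesis unfolding G_def by auto
  qed
  have sninf: "s \<noteq> -\<infinity>" using a0s by auto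
  have Qs: "Q s"
  proof -
    obtain s' :: real where s': "ereal s' < s" "\<forall>e. ereal s' < e \<and> e \<le> s \<longrightarrow> f_ext f e = f_ext f s"
      using fext_left[OF assms(1-3) sninf] by blast
    obtain z :: real where z: "ereal s' < ereal z" "ereal z < s" using ereal_dense2[OF s'(1)] by blast
    have c: "f_ext f e = f_ext f s" if "ereal z \<le> e" "e \<le> s" for e
      using s'(2) that z(1) by (meson less_le_trans)
    have eqA: "\<mu> (Lset (A i) s) = \<mu> (Lset (A i) (ereal z))" for i
      using left_step[OF H AR a0A z(2) c] by blast
    have eqU: "\<mu> (Lset U s) = \<mu> (Lset U (ereal z))"
      using left_step[OF H UR a0U z(2) c] by blast
    have "N s = N (ereal z)" unfolding N_def using eqA by simp
    moreover have "Q (ereal z)" using Qlt z(2) by blast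
    ultimately show ?thesis unfolding Q_def using eqU by simp
  qed
  have sG: "s \<in> G" unfolding G_def using Qlt Qs by (auto simp: le_less)
  have sinf: "s = \<infinity>"
  proof (rule ccontr)
    assume "s \<noteq> \<infinity>"
    with sninf obtain r where r: "s = ereal r" by (cases s) auto
    have "\<exists>d0>r. \<forall>x. ereal r < x \<and> x \<le> ereal d0 \<longrightarrow> Q x"
    proof (cases "r \<in> U")
      case False
      obtain d where d: "r < d \<and> (\<forall>y. r \<le> y \<and> y < d \<longrightarrow> (y \<in> U \<longleftrightarrow> r \<in> U))"
        using RL_SymMinus[OF US] by (rule exE)
      have Qx: "Q x" if x: "ereal r < x" "x \<le> ereal d" for x
      proof -
        have MU: "Mset U (ereal r) x = {}"
        proof -
          { fix y assume y: "y \<in> Mset U (ereal r) x"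
            then have "r \<le> y" "ereal y < x" "y \<in> U" unfolding Mset_def by auto
            have "ereal y < ereal d" using \<open>ereal y < x\<close> x(2) by (rule less_le_trans)
            then have "r \<le> y \<and> y < d" using \<open>r \<le> y\<close> by simp
            then have "(y \<in> U \<longleftrightarrow> r \<in> U)" by (rule conjunct2[OF d, rule_format])
            with \<open>y \<in> U\<close> False have False by simp }
          then show ?thesis by blast
        qed
        have MA: "Mset (A i) (ereal r) x = {}" for i
          using MU unfolding Mset_def U_def by blast
        have rx: "ereal r \<le> x" using x by simp
        have eA: "\<mu> (Lset (A i) x) = \<mu> (Lset (A i) (ereal r))" for i
          using mu_split[OF H AR a0A rx] MA me by simp
        have eU: "\<mu> (Lset U x) = \<mu> (Lset U (ereal r))"
          using mu_split[OF H UR a0U rx] MU me by simp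
        have "N x = N (ereal r)" unfolding N_def using eA by simp
        then show ?thesis using Qs r eU unfolding Q_def by simp
      qed
      show ?thesis using d Qx by blast
    next
      case True
      then obtain k where k: "r \<in> A k" unfolding U_def by blast
      obtain d where d: "r < d \<and> (\<forall>y. r \<le> y \<and> y < d \<longrightarrow> (y \<in> A k \<longleftrightarrow> r \<in> A k))"
        using RL_SymMinus[OF AS] by (rule exE)
      have Qx: "Q x" if x: "ereal r < x" "x \<le> ereal d" for x
      proof -
        have xn: "x \<noteq> -\<infinity>" using x by auto
        have iv: "sym_ivl (ereal r) x = {y. ereal r \<le> ereal y \<and> ereal y < x}"
          using x(1) unfolding sym_ivl_def by simp
        have MAk0: "y \<in> A k" if y: "ereal r \<le> ereal y" "ereal y < x" for y
        proof -
          have "ereal y < ereal d" using y(2) x(2) by (rule less_le_trans)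
          then have "r \<le> y \<and> y < d" using y(1) by simp
          then have "(y \<in> A k \<longleftrightarrow> r \<in> A k)" by (rule conjunct2[OF d, rule_format])
          with k show "y \<in> A k" by simp
        qed
        have MAk: "Mset (A k) (ereal r) x = sym_ivl (ereal r) x"
          unfolding iv Mset_def using MAk0 by blast
        have MA: "Mset (A i) (ereal r) x = {}" if "i \<noteq> k" for i
        proof -
          { fix y assume "y \<in> Mset (A i) (ereal r) x"
            then have "y \<in> A i" "ereal r \<le> ereal y" "ereal y < x" unfolding Mset_def by auto
            moreover from this have "y \<in> A k" using MAk0 by blast
            ultimately have False using disj[OF that] by blast }
          then show ?thesis by blast
        qed
        have MU: "Mset U (ereal r) x = sym_ivl (ereal r) x"
        proof -
          have "\<And>y. y \<in> sym_ivl (ereal r) x \<Longrightarrow> y \<in> U"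
            unfolding iv U_def using MAk0 by blast
          then show ?thesis unfolding iv Mset_def by blast
        qed
        define t where "t = (f_ext f (ereal r) \<noteq> f_ext f x)"
        have mt: "\<mu> (sym_ivl (ereal r) x) = t" unfolding t_def using mu_ivl[OF H _ xn] by simp
        have rx: "ereal r \<le> x" using x by simp
        have eA: "\<mu> (Lset (A i) x) = (\<mu> (Lset (A i) (ereal r)) \<noteq> (i = k \<and> t))" for i
        proof (cases "i = k")
          case True
          then show ?thesis using mu_split[OF H AR a0A rx, of i] MAk mt by simp
        next
          case False
          then show ?thesis using mu_split[OF H AR a0A rx, of i] MA[OF False] me by simp
        qed
        have eU: "\<mu> (Lset U x) = (\<mu> (Lset U (ereal r)) \<noteq> t)"
          using mu_split[OF H UR a0U rx] MU mt by simp
        have Qr: "Q (ereal r)" using Qs r by simp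
        then have fin: "finite (N (ereal r))" unfolding Q_def by simp
        show ?thesis
        proof (cases t)
          case False
          then have "N x = N (ereal r)" unfolding N_def using eA by simp
          then show ?thesis using Qr eU False unfolding Q_def by simp
        next
          case True
          show ?thesis
          proof (cases "k \<in> N (ereal r)")
            case kin: True
            then have "N x = N (ereal r) - {k}" unfolding N_def using eA True by auto
            moreover have "card (N (ereal r) - {k}) = card (N (ereal r)) - 1"
              using kin fin by simp
            moreover have "card (N (ereal r)) > 0" using kin fin card_gt_0_iff by blast
            ultimately have "odd (card (N x)) = (\<not> odd (card (N (ereal r))))"
              by (cases "card (N (ereal r))") auto
            moreover have "finite (N x)" using \<open>N x = N (ereal r) - {k}\<close> fin by simp
            moreover have "\<mu> (Lset U (ereal r)) = odd (card (N (ereal r)))" using Qr unfolding Q_def by simp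
            ultimately show ?thesis using eU True unfolding Q_def by simp
          next
            case kout: False
            then have "N x = insert k (N (ereal r))" unfolding N_def using eA True by auto
            moreover have "card (insert k (N (ereal r))) = Suc (card (N (ereal r)))"
              using kout fin by simp
            ultimately show ?thesis using Qr eU True fin unfolding Q_def by simp
          qed
        qed
      qed
      show ?thesis using d Qx by blast
    qed
    then obtain d0 where d0: "r < d0" "\<And>x. ereal r < x \<Longrightarrow> x \<le> ereal d0 \<Longrightarrow> Q x" by blast
    have "ereal d0 \<in> G" unfolding G_def
    proof (intro CollectI allI impI)
      fix y assume "y \<le> ereal d0"
      show "Q y"
      proof (cases "y \<le> s")
        case True then show ?thesis using sG unfolding G_def by blast
      next
        case False then show ?thesis using d0(2) \<open>y \<le> ereal d0\<close> r by simp
      qed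
    qed
    then have "ereal d0 \<le> s" unfolding s_def by (rule Sup_upper)
    then show False using d0(1) r by simp
  qed
  have "Q \<infinity>" using Qs sinf by simp
  moreover have "Lset S \<infinity> = S" for S unfolding Lset_def by auto
  ultimately show "finite {i. \<mu> (A i)} \<and> \<mu> (\<Union>i. A i) = odd (card {i. \<mu> (A i)})"
    unfolding Q_def N_def U_def by simp
qed


end
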